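(* Let $(A,\succ,\prec)$ be an anti-pre-Novikov algebra and $s\in A\otimes A$. Then $s$ is invariant if and only if for all $x\in A$, $\zeta\in A^*$: $L_{\star}(x)T_s(\zeta)+T_s(L_{\succ}^*(x)\zeta)=0$ and $L_{\odot}(x)T_s(\zeta)+T_s(L_{\circ}^*(x)\zeta)=0$. Moreover, these two identities hold (for all $x,\zeta$) if and only if for all $\zeta,\eta\in A^*$: $L_{\star}^*(T_s(\zeta))\eta=R_{\succ}^*(T_{\tau(s)}(\eta))\zeta$ and $R_{\odot}^*(T_s(\zeta))\eta=R_{\circ}^*(T_{\tau(s)}(\eta))\zeta$.
   Context: $A$ is finite-dimensional over a field $k$. An anti-pre-Novikov algebra is $(A,\succ,\prec)$ such that with $x\circ y=x\succ y+x\prec y$: $(x\circ y-y\circ x)\succ z=y\succ(x\succ z)-x\succ(y\succ z)$; $x\prec(y\circ z)=(y\succ x)\prec z-(x\prec y)\prec z-y\succ(x\prec z)$; $(x\circ y)\succ z=-(x\succ z)\prec y$; $(x\prec y)\prec z=(x\prec z)\prec y$; $(x\circ y-y\circ x)\prec z=x\succ(y\circ z)-y\succ(x\circ z)$. Notation: $L_\ast(x)y=x\ast y$, $R_\ast(x)y=y\ast x$ for $\ast\in\{\succ,\prec,\circ\}$; $L_{\star}=L_{\circ}+R_{\circ}$, $L_{\odot}=L_{\succ}+R_{\prec}$, $R_{\odot}=R_{\succ}+L_{\prec}$; for $f:A\to\mathrm{End}(A)$, $\langle f^*(x)\zeta,y\rangle=-\langle\zeta,f(x)y\rangle$; $\tau$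 is the flip; $T_s:A^*\to A$, $\langle T_s(\zeta),\eta\rangle=\langle s,\zeta\otimes\eta\rangle$. $s$ is called invariant if $(I\otimes L_{\star}(x)-L_{\succ}(x)\otimes I)s=0$ and $(L_{\circ}(x)\otimes I-I\otimes L_{\odot}(x))s=0$ for all $x\in A$. *)

theory Defs
  imports Main "HOL-Library.Function_Algebras"
begin

text \<open>A finite-dimensional vector space over a field 'k is represented, after choosing a basis
indexed by the finite type 'n, by the coordinate space 'n \<Rightarrow> 'k.  The dual space A^* is
represented by coordinate functions 'n \<Rightarrow> 'k with respect to the dual basis, tensors in
A \<otimes> A by their coordinate arrays 'n \<Rightarrow> 'n \<Rightarrow> 'k (s = sum of s i j e_i \<otimes> e_j).\<close>

type_synonym ('n, 'k) vec = "'n \<Rightarrow> 'k"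
type_synonym ('n, 'k) binop = "('n,'k) vec \<Rightarrow> ('n,'k) vec \<Rightarrow> ('n,'k) vec"
type_synonym ('n, 'k) endo = "('n,'k) vec \<Rightarrow> ('n,'k) vec"
type_synonym ('n, 'k) tensor2 = "'n \<Rightarrow> 'n \<Rightarrow> 'k"

definition basis_vec :: "'n \<Rightarrow> ('n::finite, 'k::field) vec" where
  "basis_vec i = (\<lambda>j. if j = i then 1 else 0)"

definition scal :: "'k \<Rightarrow> ('n, 'k::field) vec \<Rightarrow> ('n, 'k) vec" where
  "scal c x = (\<lambda>i. c * x i)"

definition pairing :: "('n::finite, 'k::field) vec \<Rightarrow> ('n, 'k) vec \<Rightarrow> 'k" where
  "pairing \<zeta> y = (\<Sum>i\<in>UNIV. \<zeta> i * y i)"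

definition bilinear_op :: "('n::finite, 'k::field) binop \<Rightarrow> bool" where
  "bilinear_op m \<longleftrightarrow>
     (\<forall>x y z. m (x + y) z = m x z + m y z) \<and>
     (\<forall>x y z. m x (y + z) = m x y + m x z) \<and>
     (\<forall>c x y. m (scal c x) y = scal c (m x y)) \<and>
     (\<forall>c x y. m x (scal c y) = scal c (m x y))"

definition circ_op :: "('n::finite, 'k::field) binop \<Rightarrow> ('n,'k) binop \<Rightarrow> ('n,'k) binop" where
  "circ_op succ prec x y = succ x y + prec x y"

definition anti_pre_Novikov :: "('n::finite, 'k::field) binop \<Rightarrow> ('n,'k) binop \<Rightarrow> bool" where
  "anti_pre_Novikov succ prec \<longleftrightarrow>
     bilinear_op succ \<and> bilinear_op prec \<and>
     (let circ = circ_op succ prec in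
     (\<forall>x y z. succ (circ x y - circ y x) z = succ y (succ x z) - succ x (succ y z)) \<and>
     (\<forall>x y z. prec x (circ y z) = prec (succ y x) z - prec (prec x y) z - succ y (prec x z)) \<and>
     (\<forall>x y z. succ (circ x y) z = - prec (succ x z) y) \<and>
     (\<forall>x y z. prec (prec x y) z = prec (prec x z) y) \<and>
     (\<forall>x y z. prec (circ x y - circ y x) z = succ x (circ y z) - succ y (circ x z)))"

definition Lop :: "('n::finite, 'k::field) binop \<Rightarrow> ('n,'k) vec \<Rightarrow> ('n,'k) endo" where
  "Lop m x = (\<lambda>y. m x y)"

definition Rop :: "('n::finite, 'k::field) binop \<Rightarrow> ('n,'k) vec \<Rightarrow> ('n,'k) endo" where
  "Rop m x = (\<lambda>y. m y x)"

definition L_star :: "('n::finite, 'k::field) binop \<Rightarrow> ('n,'k) binop \<Rightarrow> ('n,'k) vec \<Rightarrow> ('n,'k) endo" where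
  "L_star succ prec x = (\<lambda>y. Lop (circ_op succ prec) x y + Rop (circ_op succ prec) x y)"

definition L_odot :: "('n::finite, 'k::field) binop \<Rightarrow> ('n,'k) binop \<Rightarrow> ('n,'k) vec \<Rightarrow> ('n,'k) endo" where
  "L_odot succ prec x = (\<lambda>y. Lop succ x y + Rop prec x y)"

definition R_odot :: "('n::finite, 'k::field) binop \<Rightarrow> ('n,'k) binop \<Rightarrow> ('n,'k) vec \<Rightarrow> ('n,'k) endo" where
  "R_odot succ prec x = (\<lambda>y. Rop succ x y + Lop prec x y)"

text \<open>dual operator: pairing (f^*(x) \<zeta>) y = - pairing \<zeta> (f(x) y); in coordinates w.r.t. the dual basis\<close>
definition dual_rep :: "(('n::finite, 'k::field) vec \<Rightarrow> ('n,'k) endo) \<Rightarrow> ('n,'k) vec \<Rightarrow> ('n,'k) endo" where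
  "dual_rep f x \<zeta> = (\<lambda>j. - pairing \<zeta> (f x (basis_vec j)))"

text \<open>T_s : A^* \<rightarrow> A with pairing (T_s \<zeta>) \<eta> = <s, \<zeta> \<otimes> \<eta>>\<close>
definition T_op :: "('n::finite, 'k::field) tensor2 \<Rightarrow> ('n,'k) vec \<Rightarrow> ('n,'k) vec" where
  "T_op s \<zeta> = (\<lambda>j. \<Sum>i\<in>UNIV. s i j * \<zeta> i)"

definition flip :: "('n, 'k) tensor2 \<Rightarrow> ('n, 'k) tensor2" where
  "flip s = (\<lambda>i j. s j i)"

definition tensor_map :: "('n::finite, 'k::field) endo \<Rightarrow> ('n,'k) endo \<Rightarrow> ('n,'k) tensor2 \<Rightarrow> ('n,'k) tensor2" where
  "tensor_map F G s = (\<lambda>a b. \<Sum>i\<in>UNIV. \<Sum>j\<in>UNIV. s i j * F (basis_vec i) a * G (basis_vec j) b)"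

definition invariant :: "('n::finite, 'k::field) binop \<Rightarrow> ('n,'k) binop \<Rightarrow> ('n,'k) tensor2 \<Rightarrow> bool" where
  "invariant succ prec s \<longleftrightarrow>
     (\<forall>x. tensor_map id (L_star succ prec x) s - tensor_map (Lop succ x) id s = 0) \<and>
     (\<forall>x. tensor_map (Lop (circ_op succ prec) x) id s - tensor_map id (L_odot succ prec x) s = 0)"

end

theory Submission
  imports Defs
begin

lemma fsum_apply: "(sum f A :: 'a \<Rightarrow> 'b::comm_monoid_add) b = (\<Sum>i\<in>A. f i b)"
  by (induction A rule: infinite_finite_induct) auto

lemma vec_expand: "(x::('n::finite,'k::field) vec) = (\<Sum>i\<in>UNIV. scal (x i) (basis_vec i))"
proof
  fix b show "x b = (\<Sum>i\<in>UNIV. scal (x i) (basis_vec i)) b"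
    by (simp add: fsum_apply scal_def basis_vec_def if_distrib[where f="\<lambda>t. _ * t"] cong: if_cong)
qed

lemma lin_expand:
  fixes F :: "('n::finite,'k::field) vec \<Rightarrow> ('m, 'k) vec"
  assumes add: "\<And>x y. F (x+y) = F x + F y" and hom: "\<And>c x. F (scal c x) = scal c (F x)"
  shows "F x b = (\<Sum>i\<in>UNIV. x i * F (basis_vec i) b)"
proof -
  have F0: "F 0 = 0" using add[of 0 0] by simp
  have Fs: "F (sum g A) = (\<Sum>i\<in>A. F (g i))" for g :: "'n \<Rightarrow> ('n,'k) vec" and A
  proof (induction A rule: infinite_finite_induct)
    case (infinite A) then show ?case by (metis F0 sum.infinite)
  next
    case empty then show ?case by (simp only: sum.empty F0)
  next
    case (insert a A) then show ?case by (simp only: sum.insert[OF insert(1,2)] add insert(3))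
  qed
  have "F x = (\<Sum>i\<in>UNIV. F (scal (x i) (basis_vec i)))"
    by (subst vec_expand) (rule Fs)
  then have "F x b = (\<Sum>i\<in>UNIV. F (scal (x i) (basis_vec i)) b)" by (simp only: fsum_apply)
  then show ?thesis by (simp only: hom) (simp add: scal_def)
qed

lemma bil:
  assumes "bilinear_op m"
  shows "m (x + y) z = m x z + m y z" "m x (y + z) = m x y + m x z"
    "m (scal c x) y = scal c (m x y)" "m x (scal c y) = scal c (m x y)"
  using assms unfolding bilinear_op_def by auto

lemma bil_circ: "bilinear_op succ \<Longrightarrow> bilinear_op prec \<Longrightarrow> bilinear_op (circ_op succ prec)"
  unfolding bilinear_op_def circ_op_def by (auto simp: scal_def algebra_simps fun_eq_iff)

lemma expand1: "bilinear_op m \<Longrightarrow> m x y b = (\<Sum>i\<in>UNIV. x i * m (basis_vec i) y b)"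
  by (rule lin_expand[where F="\<lambda>x. m x y"]) (auto simp: bil)
lemma expand2: "bilinear_op m \<Longrightarrow> m x y b = (\<Sum>i\<in>UNIV. y i * m x (basis_vec i) b)"
  by (rule lin_expand[where F="\<lambda>y. m x y"]) (auto simp: bil)

lemma tm_id_left: "tensor_map id G s a b = (\<Sum>j\<in>UNIV. s a j * G (basis_vec j) b)"
  unfolding tensor_map_def by (subst sum.swap) (simp add: basis_vec_def if_distrib[where f="\<lambda>t. _ * t"] if_distrib[where f="\<lambda>t. t * _"] sum.delta cong: if_cong)
lemma tm_id_right: "tensor_map F id s a b = (\<Sum>i\<in>UNIV. s i b * F (basis_vec i) a)"
  unfolding tensor_map_def by (simp add: basis_vec_def if_distrib sum.delta mult.assoc mult.commute cong: if_cong)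

lemma gen_id:
  assumes G: "\<And>y b. G y b = (\<Sum>j\<in>UNIV. y j * G (basis_vec j) b)"
  shows "(G (T_op s \<zeta>) + T_op s (dual_rep (Lop m) x \<zeta>)) b =
     (\<Sum>a\<in>UNIV. \<zeta> a * (tensor_map id G s a b - tensor_map (Lop m x) id s a b))"
proof -
  have 1: "G (T_op s \<zeta>) b = (\<Sum>a\<in>UNIV. \<zeta> a * (\<Sum>j\<in>UNIV. s a j * G (basis_vec j) b))"
    apply (subst G)
    apply (simp add: T_op_def sum_distrib_left sum_distrib_right)
    apply (subst sum.swap)
    apply (simp add: algebra_simps)
    done
  have 2: "T_op s (dual_rep (Lop m) x \<zeta>) b = - (\<Sum>a\<in>UNIV. \<zeta> a * (\<Sum>i\<in>UNIV. s i b * m x (basis_vec i) a))"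
    apply (simp add: T_op_def dual_rep_def pairing_def Lop_def sum_distrib_left sum_distrib_right sum_negf)
    apply (subst sum.swap)
    apply (simp add: algebra_simps)
    done
  show ?thesis
    by (simp add: 1 2 tm_id_left tm_id_right Lop_def right_diff_distrib sum_subtractf)
qed

lemma Lstar_exp:
  assumes "bilinear_op succ" "bilinear_op prec"
  shows "L_star succ prec x y b = (\<Sum>j\<in>UNIV. y j * L_star succ prec x (basis_vec j) b)"
proof -
  have c: "bilinear_op (circ_op succ prec)" using assms by (rule bil_circ)
  show ?thesis
    unfolding L_star_def Lop_def Rop_def plus_fun_apply
    by (subst expand2[OF c], subst expand1[OF c]) (simp add: sum.distrib algebra_simps)
qed

lemma Lodot_exp:
  assumes "bilinear_op succ" "bilinear_op prec"
  shows "L_odot succ prec x y b = (\<Sum>j\<in>UNIV. y j * L_odot succ prec x (basis_vec j) b)"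
    unfolding L_odot_def Lop_def Rop_def plus_fun_apply
    by (subst expand2[OF assms(1)], subst expand1[OF assms(2)]) (simp add: sum.distrib algebra_simps)

lemma mat_zero: "(\<forall>\<zeta>::('n::finite,'k::field) vec. \<forall>b. (\<Sum>a\<in>UNIV. \<zeta> a * D a b) = 0) \<longleftrightarrow> D = 0"
proof
  assume h: "\<forall>\<zeta>::('n,'k) vec. \<forall>b. (\<Sum>a\<in>UNIV. \<zeta> a * D a b) = 0"
  show "D = 0"
  proof (rule ext, rule ext)
    fix a b
    have "(\<Sum>a'\<in>UNIV. basis_vec a a' * D a' b) = D a b"
      by (simp add: basis_vec_def if_distrib[where f="\<lambda>t. t * _"] cong: if_cong)
    then show "D a b = 0 a b" using h by (metis zero_fun_apply)
  qed
qed simp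

lemma pairing_basis: "pairing (basis_vec b) v = v b"
  by (simp add: pairing_def basis_vec_def if_distrib[where f="\<lambda>t. t * _"] cong: if_cong)

lemma pairing_add: "pairing z (v + w) = pairing z v + pairing z w"
  by (simp add: pairing_def algebra_simps sum.distrib)

lemma dual_T:
  assumes bm: "bilinear_op m"
  shows "pairing \<zeta> (m (basis_vec j) (T_op (flip s) \<eta>)) = - pairing \<eta> (T_op s (dual_rep (Lop m) (basis_vec j) \<zeta>))"
proof -
  have "pairing \<zeta> (m (basis_vec j) (T_op (flip s) \<eta>)) =
     (\<Sum>a\<in>UNIV. \<zeta> a * (\<Sum>i\<in>UNIV. (\<Sum>b\<in>UNIV. s i b * \<eta> b) * m (basis_vec j) (basis_vec i) a))"
    unfolding pairing_def by (subst expand2[OF bm]) (simp add: T_op_def flip_def mult.commute)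
  also have "\<dots> = (\<Sum>a\<in>UNIV. \<Sum>i\<in>UNIV. \<Sum>b\<in>UNIV. \<zeta> a * s i b * \<eta> b * m (basis_vec j) (basis_vec i) a)"
    by (simp add: sum_distrib_left sum_distrib_right algebra_simps)
  also have "\<dots> = (\<Sum>b\<in>UNIV. \<Sum>i\<in>UNIV. \<Sum>a\<in>UNIV. \<zeta> a * s i b * \<eta> b * m (basis_vec j) (basis_vec i) a)"
    apply (subst sum.swap) apply (subst (2) sum.swap) apply (subst sum.swap) ..
  also have "\<dots> = - pairing \<eta> (T_op s (dual_rep (Lop m) (basis_vec j) \<zeta>))"
    by (simp add: pairing_def T_op_def dual_rep_def Lop_def sum_distrib_left sum_distrib_right sum_negf algebra_simps)
  finally show ?thesis .
qed

lemma C_lin: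
  assumes bm: "bilinear_op m"
    and Hl: "\<And>x y b. H x y b = (\<Sum>p\<in>UNIV. x p * H (basis_vec p) y b)"
  shows "(H x w + T_op s (dual_rep (Lop m) x \<zeta>)) b =
     (\<Sum>p\<in>UNIV. x p * (H (basis_vec p) w + T_op s (dual_rep (Lop m) (basis_vec p) \<zeta>)) b)"
proof -
  have "T_op s (dual_rep (Lop m) x \<zeta>) b = (\<Sum>p\<in>UNIV. x p * T_op s (dual_rep (Lop m) (basis_vec p) \<zeta>) b)"
  proof (rule lin_expand[where F="\<lambda>x. T_op s (dual_rep (Lop m) x \<zeta>)"])
    fix x y show "T_op s (dual_rep (Lop m) (x + y) \<zeta>) = T_op s (dual_rep (Lop m) x \<zeta>) + T_op s (dual_rep (Lop m) y \<zeta>)"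
      by (rule ext) (simp add: T_op_def dual_rep_def Lop_def bil(1)[OF bm] pairing_def distrib_left algebra_simps sum.distrib sum_subtractf sum_negf)
  next
    fix c x show "T_op s (dual_rep (Lop m) (scal c x) \<zeta>) = scal c (T_op s (dual_rep (Lop m) x \<zeta>))"
      by (rule ext) (simp add: T_op_def dual_rep_def Lop_def bil(3)[OF bm, unfolded scal_def] scal_def pairing_def
          sum_distrib_left algebra_simps)
  qed
  then show ?thesis by (simp add: Hl[of x] sum.distrib algebra_simps)
qed

lemma part1_gen:
  assumes Hr: "\<And>y b. G y b = (\<Sum>j\<in>UNIV. y j * G (basis_vec j) b)"
  shows "(\<forall>\<zeta>. G (T_op s \<zeta>) + T_op s (dual_rep (Lop m) x \<zeta>) = 0) \<longleftrightarrow>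
     tensor_map id G s - tensor_map (Lop m x) id s = 0"
proof -
  have "(\<forall>\<zeta>. G (T_op s \<zeta>) + T_op s (dual_rep (Lop m) x \<zeta>) = 0) \<longleftrightarrow>
    (\<forall>\<zeta>::('a,'b) vec. \<forall>b. (\<Sum>a\<in>UNIV. \<zeta> a * (tensor_map id G s - tensor_map (Lop m x) id s) a b) = 0)"
  proof -
    have "(G (T_op s \<zeta>) + T_op s (dual_rep (Lop m) x \<zeta>)) b = (\<Sum>a\<in>UNIV. \<zeta> a * (tensor_map id G s - tensor_map (Lop m x) id s) a b)" for \<zeta> b
      unfolding fun_diff_def by (rule gen_id[where G=G, OF Hr])
    then show ?thesis by (simp only: fun_eq_iff zero_fun_apply)
  qed
  then show ?thesis by (simp only: mat_zero)
qed

lemma part2_gen: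
  assumes bm: "bilinear_op m"
    and Hl: "\<And>x y b. H x y b = (\<Sum>p\<in>UNIV. x p * H (basis_vec p) y b)"
    and Hs: "\<And>y j. G y (basis_vec j) = H (basis_vec j) y"
  shows "(\<forall>x \<zeta>. H x (T_op s \<zeta>) + T_op s (dual_rep (Lop m) x \<zeta>) = 0) \<longleftrightarrow>
     (\<forall>\<zeta> \<eta>. dual_rep G (T_op s \<zeta>) \<eta> = dual_rep (Rop m) (T_op (flip s) \<eta>) \<zeta>)"
proof -
  have key: "dual_rep G (T_op s \<zeta>) \<eta> j - dual_rep (Rop m) (T_op (flip s) \<eta>) \<zeta> j =
     - pairing \<eta> (H (basis_vec j) (T_op s \<zeta>) + T_op s (dual_rep (Lop m) (basis_vec j) \<zeta>))" for \<zeta> \<eta> j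
    by (simp add: dual_rep_def Hs Rop_def dual_T[OF bm] pairing_add)
  show ?thesis
  proof
    assume h: "\<forall>x \<zeta>. H x (T_op s \<zeta>) + T_op s (dual_rep (Lop m) x \<zeta>) = 0"
    show "\<forall>\<zeta> \<eta>. dual_rep G (T_op s \<zeta>) \<eta> = dual_rep (Rop m) (T_op (flip s) \<eta>) \<zeta>"
    proof (intro allI ext)
      fix \<zeta> \<eta> j
      have "pairing \<eta> (0::('a,'b) vec) = 0" by (simp add: pairing_def)
      then have "dual_rep G (T_op s \<zeta>) \<eta> j - dual_rep (Rop m) (T_op (flip s) \<eta>) \<zeta> j = 0"
        using key h by simp
      then show "dual_rep G (T_op s \<zeta>) \<eta> j = dual_rep (Rop m) (T_op (flip s) \<eta>) \<zeta> j" by simp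
    qed
  next
    assume h: "\<forall>\<zeta> \<eta>. dual_rep G (T_op s \<zeta>) \<eta> = dual_rep (Rop m) (T_op (flip s) \<eta>) \<zeta>"
    have z: "(H (basis_vec j) (T_op s \<zeta>) + T_op s (dual_rep (Lop m) (basis_vec j) \<zeta>)) b = 0" for j \<zeta> b
      using key[of \<zeta> "basis_vec b" j] h by (simp add: pairing_basis neg_eq_iff_add_eq_0)
    show "\<forall>x \<zeta>. H x (T_op s \<zeta>) + T_op s (dual_rep (Lop m) x \<zeta>) = 0"
    proof (intro allI ext)
      fix x \<zeta> b
      show "(H x (T_op s \<zeta>) + T_op s (dual_rep (Lop m) x \<zeta>)) b = 0 b"
      proof -
        have "(H x (T_op s \<zeta>) + T_op s (dual_rep (Lop m) x \<zeta>)) b = (\<Sum>p\<in>UNIV. x p * (H (basis_vec p) (T_op s \<zeta>) + T_op s (dual_rep (Lop m) (basis_vec p) \<zeta>)) b)"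
          by (rule C_lin[where H=H, OF bm Hl])
        also have "\<dots> = 0" by (simp only: z mult_zero_right sum.neutral_const)
        finally show ?thesis by simp
      qed
    qed
  qed
qed

lemma Lstar_exp1:
  assumes "bilinear_op succ" "bilinear_op prec"
  shows "L_star succ prec x y b = (\<Sum>j\<in>UNIV. x j * L_star succ prec (basis_vec j) y b)"
proof -
  have c: "bilinear_op (circ_op succ prec)" using assms by (rule bil_circ)
  show ?thesis
    unfolding L_star_def Lop_def Rop_def plus_fun_apply
    by (subst expand1[OF c], subst expand2[OF c]) (simp add: sum.distrib algebra_simps)
qed

lemma Lodot_exp1:
  assumes "bilinear_op succ" "bilinear_op prec"
  shows "L_odot succ prec x y b = (\<Sum>j\<in>UNIV. x j * L_odot succ prec (basis_vec j) y b)"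
    unfolding L_odot_def Lop_def Rop_def plus_fun_apply
    by (subst expand1[OF assms(1)], subst expand2[OF assms(2)]) (simp add: sum.distrib algebra_simps)

lemma Lstar_sym: "L_star succ prec y z = L_star succ prec z y"
  unfolding L_star_def Lop_def Rop_def by (simp add: add.commute)

lemma Rodot_sym: "R_odot succ prec y z = L_odot succ prec z y"
  unfolding R_odot_def L_odot_def Lop_def Rop_def by simp

theorem mainTheorem9:
  fixes succ prec :: "('n::finite, 'k::field) binop" and s :: "('n,'k) tensor2"
  assumes "anti_pre_Novikov succ prec"
  shows "(invariant succ prec s \<longleftrightarrow>
           (\<forall>x \<zeta>. L_star succ prec x (T_op s \<zeta>) + T_op s (dual_rep (Lop succ) x \<zeta>) = 0 \<and>
                   L_odot succ prec x (T_op s \<zeta>) + T_op s (dual_rep (Lop (circ_op succ prec)) x \<zeta>) = 0))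
       \<and> ((\<forall>x \<zeta>. L_star succ prec x (T_op s \<zeta>) + T_op s (dual_rep (Lop succ) x \<zeta>) = 0 \<and>
                   L_odot succ prec x (T_op s \<zeta>) + T_op s (dual_rep (Lop (circ_op succ prec)) x \<zeta>) = 0)
          \<longleftrightarrow>
          (\<forall>\<zeta> \<eta>. dual_rep (L_star succ prec) (T_op s \<zeta>) \<eta> = dual_rep (Rop succ) (T_op (flip s) \<eta>) \<zeta> \<and>
                  dual_rep (R_odot succ prec) (T_op s \<zeta>) \<eta> = dual_rep (Rop (circ_op succ prec)) (T_op (flip s) \<eta>) \<zeta>))"
proof -
  have bs: "bilinear_op succ" and bp: "bilinear_op prec"
    using assms unfolding anti_pre_Novikov_def by auto
  have bc: "bilinear_op (circ_op succ prec)" using bs bp by (rule bil_circ)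
  have p1a: "(\<forall>\<zeta>. L_star succ prec x (T_op s \<zeta>) + T_op s (dual_rep (Lop succ) x \<zeta>) = 0) \<longleftrightarrow>
      tensor_map id (L_star succ prec x) s - tensor_map (Lop succ x) id s = 0" for x
    by (rule part1_gen) (rule Lstar_exp[OF bs bp])
  have p1b: "(\<forall>\<zeta>. L_odot succ prec x (T_op s \<zeta>) + T_op s (dual_rep (Lop (circ_op succ prec)) x \<zeta>) = 0) \<longleftrightarrow>
      tensor_map (Lop (circ_op succ prec) x) id s - tensor_map id (L_odot succ prec x) s = 0" for x
    by (subst part1_gen) (rule Lodot_exp[OF bs bp], metis right_minus_eq)
  have p2a: "(\<forall>x \<zeta>. L_star succ prec x (T_op s \<zeta>) + T_op s (dual_rep (Lop succ) x \<zeta>) = 0) \<longleftrightarrow>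
      (\<forall>\<zeta> \<eta>. dual_rep (L_star succ prec) (T_op s \<zeta>) \<eta> = dual_rep (Rop succ) (T_op (flip s) \<eta>) \<zeta>)"
    by (rule part2_gen[OF bs]) (rule Lstar_exp1[OF bs bp], rule Lstar_sym)
  have p2b: "(\<forall>x \<zeta>. L_odot succ prec x (T_op s \<zeta>) + T_op s (dual_rep (Lop (circ_op succ prec)) x \<zeta>) = 0) \<longleftrightarrow>
      (\<forall>\<zeta> \<eta>. dual_rep (R_odot succ prec) (T_op s \<zeta>) \<eta> = dual_rep (Rop (circ_op succ prec)) (T_op (flip s) \<eta>) \<zeta>)"
    by (rule part2_gen[OF bc]) (rule Lodot_exp1[OF bs bp], rule Rodot_sym)
  show ?thesis
    unfolding invariant_def using p1a p1b p2a p2b by blast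
qed

end
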